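(* Consider the delayed online convex optimization setting described in the context, with a non-empty, closed, convex domain $\mathcal{X}\subseteq\mathbb{R}^n$. Let $\lambda>0$ and $G\ge 0$, and assume that each loss $f_t$ ($t\in[T]$) is $\lambda$-strongly convex with respect to the Euclidean norm, i.e. $f_t(y)\ge f_t(x)+\langle\nabla f_t(x),y-x\rangle+\frac{\lambda}{2}\|y-x\|_2^2$ for all $x,y\in\mathcal{X}$, and that $\max_{x\in\mathcal{X}}\|\nabla f_t(x)\|_2\le G$. Consider the learner (Delayed FTRL) that plays an arbitrary $x_1\in\mathcal{X}$ and, for each $t\ge 1$, after observing $g_\tau$ for all $\tau\in o_{t+1}\setminus o_t$, plays at round $t+1$ $$x_{t+1}\in\arg\min_{x\in\mathcal{X}}\ \sum_{\tau\in o_{t+1}}\langle g_\tau,x\rangle+\frac{\lambda}{2}\sum_{s=1}^{t}\|x-x_s\|_2^2 .$$ Then $$\mathrm{Reg}_T=\mathcal{O}\left(\frac{G^2}{\lambda}\left(\ln T+\min\left\{\sigma_{\max}\ln T,\sqrt{d_{\mathrm{tot}}}\right\}\right)\right),$$ i.e. there is an absolute numerical constant $C>0$ (independent of $T,n,\lambda,G$, the losses and the delays) such that for every $T\ge 2$, $\mathrm{Reg}_T\le C\,\frac{G^2}{\lambda}\left(\ln T+\min\{\sigma_{\max}\ln T,\sqrt{d_{\mathrm{tot}}}\}\right)$.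
   Context: Delayed OCO setting: $T\ge1$ and $n\ge1$ are integers, $[T]=\{1,\dots,T\}$. For each round $t\in[T]$ the learner chooses $x_t\in\mathcal{X}$ and incurs loss $f_t(x_t)$, where $f_t:\mathcal{X}\to\mathbb{R}$ is convex and differentiable (and may be chosen adversarially). The gradient $g_t=\nabla f_t(x_t)$ is revealed to the learner only at the end of round $t+d_t$, where $d_t\in\{0,1,2,\dots\}$ is an arbitrary delay unknown to the learner; it is assumed that $t+d_t\le T$ for all $t\in[T]$. For $t\ge 1$ define $o_t=\{\tau\in\mathbb{N}:\tau+d_\tau<t\}\subseteq[t-1]$ (rounds whose gradients are available before round $t$) and $m_t=[t-1]\setminus o_t$. Let $\sigma_{\max}=\max_{t\in[T]}|m_t|$, $d_{\max}=\max_{t\in[T]}d_t$, and $d_{\mathrm{tot}}=\sum_{t=1}^T d_t$. The regret against $u\in\mathcal{X}$ is $\mathrm{Reg}_T(u)=\sum_{t=1}^T(f_t(x_t)-f_t(u))$ and $\mathrm{Reg}_T=\sup_{u\in\mathcal{X}}\mathrm{Reg}_T(u)$. *)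

theory Defs
  imports "HOL-Analysis.Analysis"
begin

text \<open>Euclidean space R^n, for n varying inside the statement, is represented by
  vectors v :: nat => real with v i = 0 for all i >= n (explicit carrier).\<close>

definition Rn :: "nat \<Rightarrow> (nat \<Rightarrow> real) set" where
  "Rn n = {v. \<forall>i\<ge>n. v i = 0}"

definition ip :: "nat \<Rightarrow> (nat \<Rightarrow> real) \<Rightarrow> (nat \<Rightarrow> real) \<Rightarrow> real" where
  "ip n u v = (\<Sum>i<n. u i * v i)"

definition nrm :: "nat \<Rightarrow> (nat \<Rightarrow> real) \<Rightarrow> real" where
  "nrm n v = sqrt (ip n v v)"

definition vdiff :: "(nat \<Rightarrow> real) \<Rightarrow> (nat \<Rightarrow> real) \<Rightarrow> (nat \<Rightarrow> real)" where
  "vdiff u v = (\<lambda>i. u i - v i)"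

definition cvx_comb :: "real \<Rightarrow> (nat \<Rightarrow> real) \<Rightarrow> (nat \<Rightarrow> real) \<Rightarrow> (nat \<Rightarrow> real)" where
  "cvx_comb \<theta> x y = (\<lambda>i. \<theta> * x i + (1 - \<theta>) * y i)"

definition rn_closed :: "nat \<Rightarrow> (nat \<Rightarrow> real) set \<Rightarrow> bool" where
  "rn_closed n X \<longleftrightarrow> (\<forall>s y. (\<forall>k. s k \<in> X) \<and> y \<in> Rn n \<and>
      (\<lambda>k. nrm n (vdiff (s k) y)) \<longlonglongrightarrow> 0 \<longrightarrow> y \<in> X)"

definition cvx_set :: "(nat \<Rightarrow> real) set \<Rightarrow> bool" where
  "cvx_set X \<longleftrightarrow> (\<forall>x\<in>X. \<forall>y\<in>X. \<forall>\<theta>. 0 \<le> \<theta> \<and> \<theta> \<le> 1 \<longrightarrow> cvx_comb \<theta> x y \<in> X)"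

definition cvx_fun :: "(nat \<Rightarrow> real) set \<Rightarrow> ((nat \<Rightarrow> real) \<Rightarrow> real) \<Rightarrow> bool" where
  "cvx_fun X f \<longleftrightarrow> (\<forall>x\<in>X. \<forall>y\<in>X. \<forall>\<theta>. 0 \<le> \<theta> \<and> \<theta> \<le> 1 \<longrightarrow>
      f (cvx_comb \<theta> x y) \<le> \<theta> * f x + (1 - \<theta>) * f y)"

definition has_grad :: "nat \<Rightarrow> ((nat \<Rightarrow> real) \<Rightarrow> real) \<Rightarrow> (nat \<Rightarrow> real) \<Rightarrow> (nat \<Rightarrow> real) \<Rightarrow> bool" where
  "has_grad n f g x \<longleftrightarrow> g \<in> Rn n \<and>
     (\<forall>\<epsilon>>0. \<exists>\<delta>>0. \<forall>y\<in>Rn n. nrm n (vdiff y x) < \<delta> \<longrightarrow>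
        \<bar>f y - f x - ip n g (vdiff y x)\<bar> \<le> \<epsilon> * nrm n (vdiff y x))"

definition strongly_cvx :: "nat \<Rightarrow> real \<Rightarrow> (nat \<Rightarrow> real) set \<Rightarrow> ((nat \<Rightarrow> real) \<Rightarrow> real)
    \<Rightarrow> ((nat \<Rightarrow> real) \<Rightarrow> (nat \<Rightarrow> real)) \<Rightarrow> bool" where
  "strongly_cvx n lam X f gradf \<longleftrightarrow> (\<forall>x\<in>X. \<forall>y\<in>X.
      f y \<ge> f x + ip n (gradf x) (vdiff y x) + lam / 2 * (nrm n (vdiff y x))\<^sup>2)"

text \<open>Delay bookkeeping: o_t, m_t, sigma_max, d_tot (rounds are 1,2,...).\<close>
definition obs :: "(nat \<Rightarrow> nat) \<Rightarrow> nat \<Rightarrow> nat set" where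
  "obs d t = {\<tau>. 1 \<le> \<tau> \<and> \<tau> + d \<tau> < t}"

definition miss :: "(nat \<Rightarrow> nat) \<Rightarrow> nat \<Rightarrow> nat set" where
  "miss d t = {1..<t} - obs d t"

definition sigma_max :: "(nat \<Rightarrow> nat) \<Rightarrow> nat \<Rightarrow> nat" where
  "sigma_max d T = Max ((\<lambda>t. card (miss d t)) ` {1..T})"

definition d_tot :: "(nat \<Rightarrow> nat) \<Rightarrow> nat \<Rightarrow> nat" where
  "d_tot d T = (\<Sum>t=1..T. d t)"

text \<open>Delayed FTRL objective at the end of round t (used to pick x_{t+1}),
  with g_tau = gradf tau (x tau).\<close>
definition ftrl_obj :: "nat \<Rightarrow> real \<Rightarrow> (nat \<Rightarrow> nat) \<Rightarrow> (nat \<Rightarrow> (nat \<Rightarrow> real) \<Rightarrow> (nat \<Rightarrow> real))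
    \<Rightarrow> (nat \<Rightarrow> (nat \<Rightarrow> real)) \<Rightarrow> nat \<Rightarrow> (nat \<Rightarrow> real) \<Rightarrow> real" where
  "ftrl_obj n lam d gradf x t y =
     (\<Sum>\<tau>\<in>obs d (t + 1). ip n (gradf \<tau> (x \<tau>)) y)
     + lam / 2 * (\<Sum>s=1..t. (nrm n (vdiff y (x s)))\<^sup>2)"

definition delayed_ftrl :: "nat \<Rightarrow> real \<Rightarrow> (nat \<Rightarrow> real) set \<Rightarrow> (nat \<Rightarrow> nat)
    \<Rightarrow> (nat \<Rightarrow> (nat \<Rightarrow> real) \<Rightarrow> (nat \<Rightarrow> real)) \<Rightarrow> (nat \<Rightarrow> (nat \<Rightarrow> real)) \<Rightarrow> nat \<Rightarrow> bool" where
  "delayed_ftrl n lam X d gradf x T \<longleftrightarrow> x 1 \<in> X \<and>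
     (\<forall>t. 1 \<le> t \<and> t < T \<longrightarrow> x (t + 1) \<in> X \<and>
        (\<forall>y\<in>X. ftrl_obj n lam d gradf x t (x (t + 1)) \<le> ftrl_obj n lam d gradf x t y))"

end

theory Submission
  imports Defs
begin

lemma nrm_sq: "(nrm n v)\<^sup>2 = (\<Sum>i<n. (v i)\<^sup>2)"
  unfolding nrm_def ip_def by (simp add: sum_nonneg power2_eq_square)

lemma nrm_nonneg: "nrm n v \<ge> 0"
  unfolding nrm_def ip_def by (simp add: sum_nonneg)

lemma ip_cs: "ip n u v \<le> nrm n u * nrm n v"
proof -
  have "ip n u v \<le> (\<Sum>i<n. \<bar>u i\<bar> * \<bar>v i\<bar>)"
    unfolding ip_def by (intro sum_mono) (metis abs_ge_self abs_mult)
  also have "\<dots> \<le> L2_set u {..<n} * L2_set v {..<n}" by (rule L2_set_mult_ineq)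
  also have "\<dots> = nrm n u * nrm n v"
    unfolding L2_set_def nrm_def ip_def by (simp add: power2_eq_square)
  finally show ?thesis .
qed

lemma coord_le_nrm: "i < n \<Longrightarrow> (v i)\<^sup>2 \<le> (nrm n v)\<^sup>2"
  unfolding nrm_sq by (rule member_le_sum) auto

definition Fq :: "nat \<Rightarrow> real \<Rightarrow> nat set \<Rightarrow> nat set \<Rightarrow> (nat \<Rightarrow> nat \<Rightarrow> real) \<Rightarrow> (nat \<Rightarrow> nat \<Rightarrow> real) \<Rightarrow> (nat \<Rightarrow> real) \<Rightarrow> real" where
  "Fq n c Ob S g x y = (\<Sum>\<tau>\<in>Ob. ip n (g \<tau>) y) + c / 2 * (\<Sum>s\<in>S. (nrm n (vdiff y (x s)))\<^sup>2)"

lemma ip_cvx: "ip n a (cvx_comb \<theta> z w) = ip n a w + \<theta> * (ip n a z - ip n a w)"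
  unfolding ip_def cvx_comb_def
  by (simp add: sum_distrib_left sum_subtractf[symmetric] sum.distrib[symmetric] algebra_simps)

lemma nrm_cvx: "(nrm n (vdiff (cvx_comb \<theta> z w) p))\<^sup>2 = (nrm n (vdiff w p))\<^sup>2
   + \<theta> * ((nrm n (vdiff z p))\<^sup>2 - (nrm n (vdiff w p))\<^sup>2 - (nrm n (vdiff z w))\<^sup>2)
   + \<theta>\<^sup>2 * (nrm n (vdiff z w))\<^sup>2"
  unfolding nrm_sq vdiff_def cvx_comb_def
  by (simp add: sum_distrib_left sum_subtractf[symmetric] sum.distrib[symmetric] power2_eq_square algebra_simps)

lemma Fq_cvx: "Fq n c Ob S g x (cvx_comb \<theta> z w) = Fq n c Ob S g x w
   + \<theta> * (Fq n c Ob S g x z - Fq n c Ob S g x w - c * card S / 2 * (nrm n (vdiff z w))\<^sup>2)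
   + \<theta>\<^sup>2 * (c * card S / 2 * (nrm n (vdiff z w))\<^sup>2)"
  unfolding Fq_def ip_cvx nrm_cvx
  by (simp add: sum_distrib_left sum_subtractf sum.distrib algebra_simps)

lemma small_theta:
  fixes D Q :: real
  assumes "Q \<ge> 0" and h: "\<And>\<theta>. 0 < \<theta> \<Longrightarrow> \<theta> \<le> 1 \<Longrightarrow> \<theta> * D + \<theta>\<^sup>2 * Q \<ge> 0"
  shows "D \<ge> 0"
proof (rule ccontr)
  assume "\<not> D \<ge> 0"
  hence D: "D < 0" by simp
  show False
  proof (cases "Q = 0")
    case True
    with h[of 1] D show False by simp
  next
    case False
    hence Q: "Q > 0" using assms by simp
    define \<theta> where "\<theta> = min 1 (- D / (2 * Q))"
    have t0: "\<theta> > 0" unfolding \<theta>_def using D Q by (simp add: field_simps)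
    have t1: "\<theta> \<le> 1" unfolding \<theta>_def by simp
    have "\<theta> * Q \<le> - D / 2"
    proof (cases "- D / (2 * Q) \<le> 1")
      case True
      hence "\<theta> = - D / (2 * Q)" unfolding \<theta>_def by simp
      thus ?thesis using Q by simp
    next
      case False
      hence "\<theta> = 1" and "1 < - D / (2 * Q)" unfolding \<theta>_def by auto
      thus ?thesis using Q by (simp add: field_simps)
    qed
    hence "D + \<theta> * Q < 0" using D by simp
    hence "\<theta> * (D + \<theta> * Q) < 0" using t0 by (simp add: mult_pos_neg)
    moreover have "\<theta> * (D + \<theta> * Q) = \<theta> * D + \<theta>\<^sup>2 * Q" by (simp add: algebra_simps power2_eq_square)
    ultimately show False using h[OF t0 t1] by simp
  qed
qed

lemma Fq_QG:
  assumes cv: "cvx_set X" and w: "w \<in> X" and mn: "\<forall>z\<in>X. Fq n c Ob S g x w \<le> Fq n c Ob S g x z"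
    and z: "z \<in> X" and c: "c \<ge> 0"
  shows "Fq n c Ob S g x z \<ge> Fq n c Ob S g x w + c * card S / 2 * (nrm n (vdiff z w))\<^sup>2"
proof -
  define Q where "Q = c * card S / 2 * (nrm n (vdiff z w))\<^sup>2"
  define D where "D = Fq n c Ob S g x z - Fq n c Ob S g x w - Q"
  have "Q \<ge> 0" unfolding Q_def using c by simp
  moreover have "\<theta> * D + \<theta>\<^sup>2 * Q \<ge> 0" if "0 < \<theta>" "\<theta> \<le> 1" for \<theta>
  proof -
    have "cvx_comb \<theta> z w \<in> X" using cv z w that unfolding cvx_set_def by simp
    hence "Fq n c Ob S g x w \<le> Fq n c Ob S g x (cvx_comb \<theta> z w)" using mn by blast
    thus ?thesis unfolding Fq_cvx D_def Q_def by simp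
  qed
  ultimately have "D \<ge> 0" by (rule small_theta)
  thus ?thesis unfolding D_def Q_def by simp
qed

lemma nrm_sym: "nrm n (vdiff a b) = nrm n (vdiff b a)"
  unfolding nrm_def ip_def vdiff_def by (simp add: algebra_simps)

lemma ip_vdiff: "ip n a (vdiff y z) = ip n a y - ip n a z"
  unfolding ip_def vdiff_def by (simp add: algebra_simps sum_subtractf)

lemma Fq_bdd_below:
  assumes fin: "finite Ob" and s0: "s0 \<in> S" and fS: "finite S" and c: "c > 0"
  shows "\<exists>K. \<forall>y. Fq n c Ob S g x y \<ge> K"
proof -
  define a where "a = (\<lambda>i. \<Sum>\<tau>\<in>Ob. g \<tau> i)"
  have ipa: "(\<Sum>\<tau>\<in>Ob. ip n (g \<tau>) y) = ip n a y" for y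
    unfolding a_def ip_def by (simp add: sum_distrib_right sum.swap[of _ Ob])
  show ?thesis
  proof (intro exI allI)
    fix y
    let ?r = "nrm n (vdiff y (x s0))"
    have "ip n a (vdiff (x s0) y) \<le> nrm n a * nrm n (vdiff (x s0) y)" by (rule ip_cs)
    hence 1: "ip n a y \<ge> ip n a (x s0) - nrm n a * ?r"
      using ip_vdiff[of n a "x s0" y] nrm_sym[of n "x s0" y] by simp
    have 2: "(\<Sum>s\<in>S. (nrm n (vdiff y (x s)))\<^sup>2) \<ge> ?r\<^sup>2"
      by (rule member_le_sum[OF s0]) (auto simp: fS)
    have 3: "- (nrm n a)\<^sup>2 / (2 * c) \<le> c / 2 * ?r\<^sup>2 - nrm n a * ?r"
    proof -
      have "0 \<le> (c * ?r - nrm n a)\<^sup>2" by simp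
      hence "0 \<le> (c * ?r - nrm n a)\<^sup>2 / (2 * c)" using c by simp
      moreover have "(c * ?r - nrm n a)\<^sup>2 / (2 * c) = c / 2 * ?r\<^sup>2 - nrm n a * ?r + (nrm n a)\<^sup>2 / (2 * c)"
        using c by (simp add: field_simps power2_eq_square)
      ultimately show ?thesis by linarith
    qed
    have "c / 2 * (\<Sum>s\<in>S. (nrm n (vdiff y (x s)))\<^sup>2) \<ge> c / 2 * ?r\<^sup>2"
      using 2 c by simp
    thus "Fq n c Ob S g x y \<ge> ip n a (x s0) - (nrm n a)\<^sup>2 / (2 * c)"
      unfolding Fq_def ipa using 1 3 by linarith
  qed
qed

lemma Fq_mid:
  "Fq n c Ob S g x (cvx_comb (1/2) z w) = (Fq n c Ob S g x z + Fq n c Ob S g x w) / 2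
     - c * card S / 8 * (nrm n (vdiff z w))\<^sup>2"
  unfolding Fq_cvx by (simp add: power2_eq_square field_simps)

lemma aux8: "(k::real) / 8 * a < b / 2 \<Longrightarrow> k > 0 \<Longrightarrow> a < 4 / k * b"
  by (simp add: field_simps)

lemma Fq_exists_min:
  assumes XR: "X \<subseteq> Rn n" and ne: "X \<noteq> {}" and cl: "rn_closed n X" and cv: "cvx_set X"
    and fin: "finite Ob" and fS: "finite S" and Sne: "S \<noteq> {}" and c: "c > 0"
  shows "\<exists>w\<in>X. \<forall>z\<in>X. Fq n c Ob S g x w \<le> Fq n c Ob S g x z"
proof -
  define F where "F = Fq n c Ob S g x"
  define \<kappa> where "\<kappa> = c * card S"
  have kp: "\<kappa> > 0" unfolding \<kappa>_def using c fS Sne by (simp add: card_gt_0_iff)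
  obtain s0 where "s0 \<in> S" using Sne by auto
  then obtain K where K: "\<And>y. F y \<ge> K" using Fq_bdd_below[OF fin _ fS c] unfolding F_def by blast
  define m where "m = Inf (F ` X)"
  have bdd: "bdd_below (F ` X)" by (rule bdd_belowI2[of _ K]) (rule K)
  have mle: "m \<le> F z" if "z \<in> X" for z unfolding m_def using that bdd by (simp add: cInf_lower)
  have "\<exists>s\<in>X. F s < m + 1 / (real k + 1)" for k
  proof -
    have "0 < 1 / (real k + 1)" by simp
    hence "Inf (F ` X) < m + 1 / (real k + 1)" unfolding m_def by linarith
    moreover have "F ` X \<noteq> {}" using ne by simp
    ultimately obtain v where "v \<in> F ` X" "v < m + 1 / (real k + 1)" using cInf_lessD by metis
    thus ?thesis by auto
  qed
  then obtain s where sX: "\<And>k. s k \<in> X" and sF: "\<And>k. F (s k) < m + 1 / (real k + 1)"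
    by metis
  have dist_bd: "(nrm n (vdiff (s k) (s j)))\<^sup>2 < 4 / \<kappa> * (1 / (real k + 1) + 1 / (real j + 1))" for k j
  proof -
    have "cvx_comb (1/2) (s k) (s j) \<in> X" using cv sX unfolding cvx_set_def by simp
    hence "m \<le> F (cvx_comb (1/2) (s k) (s j))" by (rule mle)
    hence "\<kappa> / 8 * (nrm n (vdiff (s k) (s j)))\<^sup>2 \<le> (F (s k) + F (s j)) / 2 - m"
      unfolding F_def Fq_mid \<kappa>_def by (simp add: field_simps)
    also have "\<dots> < (1 / (real k + 1) + 1 / (real j + 1)) / 2"
    proof -
      define p where "p = 1 / (real k + 1)"
      define q where "q = 1 / (real j + 1)"
      have "F (s k) < m + p" "F (s j) < m + q" using sF unfolding p_def q_def by auto
      hence "(F (s k) + F (s j)) / 2 - m < (p + q) / 2" by argo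
      thus ?thesis unfolding p_def q_def .
    qed
    finally show ?thesis using kp by (rule aux8)
  qed
  have cauchy: "Cauchy (\<lambda>k. s k i)" if "i < n" for i
  proof (rule CauchyI)
    fix e :: real assume e: "e > 0"
    obtain M :: nat where M: "8 / (\<kappa> * e\<^sup>2) < real M" using reals_Archimedean2 by blast
    show "\<exists>M. \<forall>k\<ge>M. \<forall>j\<ge>M. norm (s k i - s j i) < e"
    proof (intro exI allI impI)
      fix k j assume k: "M \<le> k" and j: "M \<le> j"
      have "1 / (real k + 1) \<le> 1 / (real M + 1)" using k by (simp add: frac_le)
      moreover have "1 / (real j + 1) \<le> 1 / (real M + 1)" using j by (simp add: frac_le)
      ultimately have "4 / \<kappa> * (1 / (real k + 1) + 1 / (real j + 1)) \<le> 4 / \<kappa> * (2 / (real M + 1))"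
        using kp by (intro mult_left_mono) auto
      also have "\<dots> < e\<^sup>2"
      proof -
        have "8 < \<kappa> * e\<^sup>2 * real M" using M kp e by (simp add: field_simps)
        moreover have "\<kappa> * e\<^sup>2 * real M \<le> \<kappa> * e\<^sup>2 * (real M + 1)"
          using kp e by (intro mult_left_mono) auto
        ultimately have "8 < \<kappa> * e\<^sup>2 * (real M + 1)" by linarith
        moreover have pos: "\<kappa> * (real M + 1) > 0" using kp by simp
        moreover have "4 / \<kappa> * (2 / (real M + 1)) = 8 / (\<kappa> * (real M + 1))" by simp
        ultimately show ?thesis by (simp add: pos_divide_less_eq mult.commute mult.left_commute)
      qed
      finally have "(nrm n (vdiff (s k) (s j)))\<^sup>2 < e\<^sup>2" using dist_bd[of k j] by linarith
      moreover have "(s k i - s j i)\<^sup>2 \<le> (nrm n (vdiff (s k) (s j)))\<^sup>2"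
        using coord_le_nrm[OF that, of "vdiff (s k) (s j)"] unfolding vdiff_def by simp
      ultimately have "\<bar>s k i - s j i\<bar>\<^sup>2 < e\<^sup>2" by simp
      hence "\<bar>s k i - s j i\<bar> < e" using e power2_less_imp_less[of "\<bar>s k i - s j i\<bar>" e] by simp
      thus "norm (s k i - s j i) < e" by simp
    qed
  qed
  define y where "y = (\<lambda>i. if i < n then lim (\<lambda>k. s k i) else 0)"
  have lim_i: "(\<lambda>k. s k i) \<longlonglongrightarrow> y i" if "i < n" for i
    using cauchy[OF that] that unfolding y_def Cauchy_convergent_iff convergent_LIMSEQ_iff by simp
  have yR: "y \<in> Rn n" unfolding Rn_def y_def by simp
  have "(\<lambda>k. sqrt (\<Sum>i<n. (s k i - y i) * (s k i - y i))) \<longlonglongrightarrow> sqrt (\<Sum>i<n. (y i - y i) * (y i - y i))"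
    by (intro tendsto_intros) (auto intro: lim_i)
  hence "(\<lambda>k. nrm n (vdiff (s k) y)) \<longlonglongrightarrow> 0" unfolding nrm_def ip_def vdiff_def by simp
  hence yX: "y \<in> X" using cl sX yR unfolding rn_closed_def by blast
  have "(\<lambda>k. F (s k)) \<longlonglongrightarrow> F y"
    unfolding F_def Fq_def nrm_def ip_def vdiff_def
    by (intro tendsto_intros) (auto intro: lim_i)
  moreover have "(\<lambda>k. F (s k)) \<longlonglongrightarrow> m"
  proof (rule tendsto_sandwich[of "\<lambda>k. m" _ _ "\<lambda>k. m + inverse (real (Suc k))"])
    show "\<forall>\<^sub>F k in sequentially. m \<le> F (s k)" using mle sX by simp
    show "\<forall>\<^sub>F k in sequentially. F (s k) \<le> m + inverse (real (Suc k))"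
      using sF by (simp add: less_imp_le inverse_eq_divide add.commute)
    show "(\<lambda>k. m) \<longlonglongrightarrow> m" by simp
    have "(\<lambda>k. m + inverse (real (Suc k))) \<longlonglongrightarrow> m + 0"
      by (intro tendsto_intros LIMSEQ_inverse_real_of_nat)
    thus "(\<lambda>k. m + inverse (real (Suc k))) \<longlonglongrightarrow> m" by simp
  qed
  ultimately have "F y = m" by (rule LIMSEQ_unique)
  thus ?thesis using yX mle unfolding F_def by auto
qed


definition ell :: "nat \<Rightarrow> real \<Rightarrow> (nat \<Rightarrow> nat \<Rightarrow> real) \<Rightarrow> (nat \<Rightarrow> nat \<Rightarrow> real) \<Rightarrow> nat \<Rightarrow> (nat \<Rightarrow> real) \<Rightarrow> real" where
  "ell n c g x t y = ip n (g t) y + c / 2 * (nrm n (vdiff y (x t)))\<^sup>2"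

lemma nrm_self: "nrm n (vdiff v v) = 0"
  unfolding nrm_def ip_def vdiff_def by simp

lemma ell_diff: "ell n c g x t a - ell n c g x t b
   = ip n (g t) (vdiff a b) + c * ip n (vdiff a (x t)) (vdiff a b) - c / 2 * (nrm n (vdiff a b))\<^sup>2"
  unfolding ell_def nrm_sq ip_def vdiff_def
  by (simp add: sum_distrib_left sum_subtractf[symmetric] sum.distrib[symmetric] power2_eq_square algebra_simps)

lemma Fq_sum: "Fq n c {1..t} {1..t} g x y = (\<Sum>s=1..t. ell n c g x s y)"
  unfolding Fq_def ell_def by (simp add: sum.distrib sum_distrib_left)

lemma Fq_Suc: "Fq n c {1..Suc t} {1..Suc t} g x y = Fq n c {1..t} {1..t} g x y + ell n c g x (Suc t) y"
  unfolding Fq_sum by simp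

lemma obs_sub: "obs d (t + 1) \<subseteq> {1..t}"
  unfolding obs_def by auto

lemma obs_fin: "finite (obs d (t + 1))"
  by (rule finite_subset[OF obs_sub]) simp

lemma Fq_split: "Fq n c {1..t} {1..t} g x y = Fq n c (obs d (t + 1)) {1..t} g x y + (\<Sum>\<tau>\<in>miss d (t + 1). ip n (g \<tau>) y)"
proof -
  have e: "{1..t} = obs d (t + 1) \<union> miss d (t + 1)" and dj: "obs d (t + 1) \<inter> miss d (t + 1) = {}"
    using obs_sub[of d t] unfolding miss_def by auto
  have "(\<Sum>\<tau>\<in>{1..t}. ip n (g \<tau>) y) = (\<Sum>\<tau>\<in>obs d (t + 1). ip n (g \<tau>) y) + (\<Sum>\<tau>\<in>miss d (t + 1). ip n (g \<tau>) y)"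
    unfolding e by (rule sum.union_disjoint) (use obs_fin[of d t] dj in \<open>auto simp: miss_def\<close>)
  thus ?thesis unfolding Fq_def by simp
qed

lemma card_miss: "card (miss d t) \<le> t - 1"
proof -
  have "miss d t \<subseteq> {1..<t}" unfolding miss_def by auto
  hence "card (miss d t) \<le> card {1..<t}" by (rule card_mono[rotated]) simp
  thus ?thesis by simp
qed

lemma ip_le_G: "nrm n a \<le> G \<Longrightarrow> ip n a v \<le> G * nrm n v"
  using ip_cs[of n a v] nrm_nonneg[of n v] by (meson mult_right_mono order_trans)


lemma lin1: "(D::real) \<ge> A + B \<Longrightarrow> D = P + Q - C \<Longrightarrow> P \<le> M \<Longrightarrow> Q \<le> M \<Longrightarrow> A + B + C = K \<Longrightarrow> K \<le> 2 * M"
  by linarith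

lemma lin2: "(D::real) = P + Q - C \<Longrightarrow> P \<le> M \<Longrightarrow> Q \<le> M \<Longrightarrow> C \<ge> 0 \<Longrightarrow> D \<le> 2 * M"
  by linarith

lemma main_bound:
  assumes XR: "X \<subseteq> Rn n" and ne: "X \<noteq> {}" and cl: "rn_closed n X" and cv: "cvx_set X"
    and lam: "lam > 0" and G: "G \<ge> 0"
    and sc: "\<forall>t\<in>{1..T}. strongly_cvx n lam X (f t) (gradf t)"
    and gb: "\<forall>t\<in>{1..T}. \<forall>z\<in>X. nrm n (gradf t z) \<le> G"
    and alg: "delayed_ftrl n lam X d gradf x T"
    and T: "T \<ge> 1" and u: "u \<in> X"
  shows "(\<Sum>t=1..T. f t (x t) - f t u) \<le> G\<^sup>2 / lam * (4 * (\<Sum>t=1..T. 1 / real t)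
           + (\<Sum>t=1..T. real (card (miss d t)) / (real t - 1)))"
proof -
  define g where "g = (\<lambda>\<tau>. gradf \<tau> (x \<tau>))"
  define L where "L = (\<lambda>t. Fq n lam {1..t} {1..t} g x)"
  define \<Phi> where "\<Phi> = (\<lambda>t. Fq n lam (obs d (t + 1)) {1..t} g x)"
  define E where "E = ell n lam g x"
  have ftrl_eq: "ftrl_obj n lam d gradf x k v = \<Phi> k v" for k v
    unfolding ftrl_obj_def \<Phi>_def Fq_def g_def by simp
  have xX: "x t \<in> X" if "t \<in> {1..T}" for t
  proof (cases "t = 1")
    case True thus ?thesis using alg unfolding delayed_ftrl_def by simp
  next
    case False hence "1 \<le> t - 1 \<and> t - 1 < T" using that by auto
    hence "x (t - 1 + 1) \<in> X" using alg unfolding delayed_ftrl_def by blast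
    thus ?thesis using False that by simp
  qed
  have xmin: "\<forall>z\<in>X. \<Phi> (t - 1) (x t) \<le> \<Phi> (t - 1) z" if "t \<in> {2..T}" for t
  proof -
    have "1 \<le> t - 1 \<and> t - 1 < T" using that by auto
    hence "\<forall>z\<in>X. ftrl_obj n lam d gradf x (t - 1) (x (t - 1 + 1)) \<le> ftrl_obj n lam d gradf x (t - 1) z"
      using alg unfolding delayed_ftrl_def by blast
    thus ?thesis using that unfolding ftrl_eq by simp
  qed
  have gG: "nrm n (g t) \<le> G" if "t \<in> {1..T}" for t
    using gb xX[OF that] that unfolding g_def by blast
  have exmin: "\<exists>w\<in>X. \<forall>z\<in>X. L k w \<le> L k z" if "k \<ge> 1" for k
    unfolding L_def by (rule Fq_exists_min[OF XR ne cl cv]) (use that lam in auto)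
  define y where "y = (\<lambda>t. if t = 1 then x 1 else (SOME w. w \<in> X \<and> (\<forall>z\<in>X. L (t - 1) w \<le> L (t - 1) z)))"
  have yprop: "y t \<in> X \<and> (\<forall>z\<in>X. L (t - 1) (y t) \<le> L (t - 1) z)" if "t \<ge> 1" for t
  proof (cases "t = 1")
    case True
    have "x 1 \<in> X" using xX T by simp
    thus ?thesis using True unfolding y_def L_def Fq_def by simp
  next
    case False
    hence "\<exists>w. w \<in> X \<and> (\<forall>z\<in>X. L (t - 1) w \<le> L (t - 1) z)" using exmin[of "t - 1"] that by fastforce
    hence "(SOME w. w \<in> X \<and> (\<forall>z\<in>X. L (t - 1) w \<le> L (t - 1) z)) \<in> X \<and>
       (\<forall>z\<in>X. L (t - 1) (SOME w. w \<in> X \<and> (\<forall>z\<in>X. L (t - 1) w \<le> L (t - 1) z)) \<le> L (t - 1) z)"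
      by (rule someI_ex)
    thus ?thesis using False unfolding y_def by simp
  qed
  have QGL: "L (t - 1) z \<ge> L (t - 1) (y t) + lam * real (t - 1) / 2 * (nrm n (vdiff z (y t)))\<^sup>2"
    if "t \<ge> 1" "z \<in> X" for t z
    using Fq_QG[OF cv, of "y t" n lam "{1..t-1}" "{1..t-1}" g x z] yprop[OF that(1)] that lam
    unfolding L_def by simp
  have Lsuc: "L t v = L (t - 1) v + E t v" if "t \<ge> 1" for t v
    using Fq_Suc[of n lam "t - 1" g x v] that unfolding L_def E_def by simp
  have Lsplit: "L (t - 1) v = \<Phi> (t - 1) v + (\<Sum>\<tau>\<in>miss d t. ip n (g \<tau>) v)" if "t \<ge> 1" for t v
    using Fq_split[of n lam "t - 1" g x v d] that unfolding L_def \<Phi>_def by simp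
  have a: "f t (x t) - f t u \<le> E t (x t) - E t u" if "t \<in> {1..T}" for t
  proof -
    have "f t u \<ge> f t (x t) + ip n (g t) (vdiff u (x t)) + lam / 2 * (nrm n (vdiff u (x t)))\<^sup>2"
      using sc that xX[OF that] u unfolding strongly_cvx_def g_def by blast
    thus ?thesis unfolding E_def ell_def ip_vdiff nrm_self by simp
  qed
  have ebound: "nrm n (vdiff (x t) (y t)) \<le> G * real (card (miss d t)) / (lam * (real t - 1))"
    if "t \<in> {1..T}" for t
  proof (cases "t = 1")
    case True thus ?thesis unfolding y_def by (simp add: nrm_self)
  next
    case False
    hence t2: "t \<in> {2..T}" and t1: "t \<ge> 1" using that by auto
    define e where "e = nrm n (vdiff (x t) (y t))"
    have h1: "\<Phi> (t - 1) (y t) \<ge> \<Phi> (t - 1) (x t) + lam * real (t - 1) / 2 * e\<^sup>2"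
      using Fq_QG[OF cv, of "x t" n lam "obs d (t - 1 + 1)" "{1..t-1}" g x "y t"] xmin[OF t2] xX[OF that]
        yprop[OF t1] lam nrm_sym[of n "y t" "x t"] unfolding \<Phi>_def e_def by simp
    have h2: "L (t - 1) (x t) \<ge> L (t - 1) (y t) + lam * real (t - 1) / 2 * e\<^sup>2"
      using QGL[OF t1 xX[OF that]] unfolding e_def .
    have "(\<Sum>\<tau>\<in>miss d t. ip n (g \<tau>) (x t)) - (\<Sum>\<tau>\<in>miss d t. ip n (g \<tau>) (y t)) \<ge> lam * real (t - 1) * e\<^sup>2"
      using h1 h2 Lsplit[OF t1, of "x t"] Lsplit[OF t1, of "y t"] by argo
    also have "(\<Sum>\<tau>\<in>miss d t. ip n (g \<tau>) (x t)) - (\<Sum>\<tau>\<in>miss d t. ip n (g \<tau>) (y t))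
        = (\<Sum>\<tau>\<in>miss d t. ip n (g \<tau>) (vdiff (x t) (y t)))"
      by (simp add: ip_vdiff sum_subtractf)
    also have "\<dots> \<le> (\<Sum>\<tau>\<in>miss d t. G * e)"
    proof (rule sum_mono)
      fix \<tau> assume "\<tau> \<in> miss d t"
      hence "\<tau> \<in> {1..T}" using that unfolding miss_def by auto
      thus "ip n (g \<tau>) (vdiff (x t) (y t)) \<le> G * e" unfolding e_def by (intro ip_le_G gG)
    qed
    also have "\<dots> = real (card (miss d t)) * G * e" by simp
    finally have key: "lam * real (t - 1) * e\<^sup>2 \<le> real (card (miss d t)) * G * e" .
    have e0: "e \<ge> 0" unfolding e_def by (rule nrm_nonneg)
    have tpos: "real t - 1 > 0" using t2 by auto
    have "e \<le> G * real (card (miss d t)) / (lam * (real t - 1))"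
    proof (cases "e = 0")
      case True thus ?thesis using G lam tpos by simp
    next
      case False
      hence ep: "e > 0" using e0 by simp
      have "(lam * (real t - 1) * e) * e \<le> (real (card (miss d t)) * G) * e"
        using key t1 by (simp add: power2_eq_square of_nat_diff mult.assoc)
      hence "lam * (real t - 1) * e \<le> real (card (miss d t)) * G" using ep by simp
      thus ?thesis using lam tpos by (simp add: pos_le_divide_eq mult.commute mult.left_commute)
    qed
    thus ?thesis unfolding e_def .
  qed
  have e_le: "nrm n (vdiff (x t) (y t)) \<le> G / lam" if "t \<in> {1..T}" for t
  proof (cases "t = 1")
    case True thus ?thesis unfolding y_def using G lam by (simp add: nrm_self)
  next
    case False
    hence tpos: "real t - 1 > 0" using that by auto
    have "real (card (miss d t)) \<le> real t - 1" using card_miss[of d t] that by auto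
    hence "G * real (card (miss d t)) \<le> G * (real t - 1)" using G by (intro mult_left_mono)
    hence "G * real (card (miss d t)) / (lam * (real t - 1)) \<le> G * (real t - 1) / (lam * (real t - 1))"
      using lam tpos by (intro divide_right_mono) auto
    also have "\<dots> = G / lam" using tpos by simp
    finally show ?thesis using ebound[OF that] by linarith
  qed
  have b: "E t (x t) - E t (y t) \<le> G\<^sup>2 * real (card (miss d t)) / (lam * (real t - 1))"
    if "t \<in> {1..T}" for t
  proof -
    have "E t (x t) - E t (y t) \<le> ip n (g t) (vdiff (x t) (y t))"
      unfolding E_def ell_def ip_vdiff nrm_self using lam by simp
    also have "\<dots> \<le> G * nrm n (vdiff (x t) (y t))" by (intro ip_le_G gG that)
    also have "\<dots> \<le> G * (G * real (card (miss d t)) / (lam * (real t - 1)))"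
      using ebound[OF that] G by (rule mult_left_mono)
    finally show ?thesis by (simp add: power2_eq_square)
  qed
  have c: "\<forall>v\<in>X. (\<Sum>t=1..k. E t (y (t + 1))) \<le> L k v" if "k \<le> T" for k
    using that
  proof (induction k)
    case 0 thus ?case unfolding L_def Fq_def by simp
  next
    case (Suc k)
    have yk: "y (Suc k + 1) \<in> X" and ymin: "\<forall>z\<in>X. L (Suc k) (y (Suc k + 1)) \<le> L (Suc k) z"
      using yprop[of "Suc k + 1"] by auto
    show ?case
    proof
      fix v assume v: "v \<in> X"
      have "(\<Sum>t=1..Suc k. E t (y (t + 1))) = (\<Sum>t=1..k. E t (y (t + 1))) + E (Suc k) (y (Suc k + 1))"
        by simp
      also have "\<dots> \<le> L k (y (Suc k + 1)) + E (Suc k) (y (Suc k + 1))"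
        using Suc yk by auto
      also have "\<dots> = L (Suc k) (y (Suc k + 1))" using Lsuc[of "Suc k"] by simp
      also have "\<dots> \<le> L (Suc k) v" using ymin v by blast
      finally show "(\<Sum>t=1..Suc k. E t (y (t + 1))) \<le> L (Suc k) v" .
    qed
  qed
  have dd: "E t (y t) - E t (y (t + 1)) \<le> 4 * G\<^sup>2 / (lam * real t)" if "t \<in> {1..T}" for t
  proof -
    have t1: "t \<ge> 1" using that by simp
    define r where "r = nrm n (vdiff (y t) (y (t + 1)))"
    have yt: "y t \<in> X" and yt1: "y (t + 1) \<in> X" using yprop[of t] yprop[of "t + 1"] t1 by auto
    have q1: "L (t - 1) (y (t + 1)) \<ge> L (t - 1) (y t) + lam * real (t - 1) / 2 * r\<^sup>2"
      using QGL[OF t1 yt1] nrm_sym[of n "y (t + 1)" "y t"] unfolding r_def by simp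
    have q2: "L t (y t) \<ge> L t (y (t + 1)) + lam * real t / 2 * r\<^sup>2"
      using QGL[of "t + 1" "y t"] yt unfolding r_def by simp
    have lo: "E t (y t) - E t (y (t + 1)) \<ge> lam * real (t - 1) / 2 * r\<^sup>2 + lam * real t / 2 * r\<^sup>2"
      using q1 q2 Lsuc[OF t1, of "y t"] Lsuc[OF t1, of "y (t + 1)"] by argo
    have i1: "ip n (g t) (vdiff (y t) (y (t + 1))) \<le> G * r"
      unfolding r_def by (intro ip_le_G gG that)
    have "ip n (vdiff (y t) (x t)) (vdiff (y t) (y (t + 1))) \<le> nrm n (vdiff (y t) (x t)) * r"
      unfolding r_def by (rule ip_cs)
    also have "\<dots> \<le> G / lam * r"
      using e_le[OF that] nrm_sym[of n "y t" "x t"] r_def nrm_nonneg by (intro mult_right_mono) auto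
    finally have "lam * ip n (vdiff (y t) (x t)) (vdiff (y t) (y (t + 1))) \<le> lam * (G / lam * r)"
      using lam by (intro mult_left_mono) auto
    hence i2: "lam * ip n (vdiff (y t) (x t)) (vdiff (y t) (y (t + 1))) \<le> G * r" using lam by simp
    have hi: "E t (y t) - E t (y (t + 1)) = ip n (g t) (vdiff (y t) (y (t + 1)))
         + lam * ip n (vdiff (y t) (x t)) (vdiff (y t) (y (t + 1))) - lam / 2 * r\<^sup>2"
      unfolding E_def ell_diff r_def ..
    have r0: "r \<ge> 0" unfolding r_def by (rule nrm_nonneg)
    have sq: "lam / 2 * r\<^sup>2 \<ge> 0" using lam by simp
    have ide: "lam * real (t - 1) / 2 * r\<^sup>2 + lam * real t / 2 * r\<^sup>2 + lam / 2 * r\<^sup>2 = lam * real t * r\<^sup>2"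
      using t1 by (simp add: of_nat_diff field_simps)
    have k1: "lam * real t * r\<^sup>2 \<le> 2 * (G * r)" by (rule lin1[OF lo hi i1 i2 ide])
    have k2: "E t (y t) - E t (y (t + 1)) \<le> 2 * (G * r)" by (rule lin2[OF hi i1 i2 sq])
    have tp: "lam * real t > 0" using lam t1 by simp
    have "2 * G * r \<le> 4 * G\<^sup>2 / (lam * real t)"
    proof (cases "r = 0")
      case True thus ?thesis using G tp by simp
    next
      case False
      hence rp: "r > 0" using r0 by simp
      have "(lam * real t * r) * r \<le> (2 * G) * r" using k1 by (simp add: power2_eq_square mult.assoc mult.left_commute)
      hence "lam * real t * r \<le> 2 * G" using rp by simp
      hence "r \<le> 2 * G / (lam * real t)" using tp by (simp add: pos_le_divide_eq mult.commute)
      hence "2 * G * r \<le> 2 * G * (2 * G / (lam * real t))" using G by (intro mult_left_mono) auto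
      thus ?thesis by (simp add: power2_eq_square)
    qed
    thus ?thesis using k2 by linarith
  qed
  have "(\<Sum>t=1..T. f t (x t) - f t u) \<le> (\<Sum>t=1..T. E t (x t) - E t u)"
    by (rule sum_mono) (rule a)
  also have "\<dots> = (\<Sum>t=1..T. E t (x t) - E t (y t)) + (\<Sum>t=1..T. E t (y t) - E t (y (t + 1)))
      + ((\<Sum>t=1..T. E t (y (t + 1))) - (\<Sum>t=1..T. E t u))"
    by (simp add: sum_subtractf)
  also have "\<dots> \<le> (\<Sum>t=1..T. G\<^sup>2 * real (card (miss d t)) / (lam * (real t - 1)))
      + (\<Sum>t=1..T. 4 * G\<^sup>2 / (lam * real t)) + 0"
  proof -
    have "(\<Sum>t=1..T. E t u) = L T u" unfolding L_def E_def Fq_sum ..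
    hence "(\<Sum>t=1..T. E t (y (t + 1))) - (\<Sum>t=1..T. E t u) \<le> 0" using c[of T] u by simp
    moreover have "(\<Sum>t=1..T. E t (x t) - E t (y t)) \<le> (\<Sum>t=1..T. G\<^sup>2 * real (card (miss d t)) / (lam * (real t - 1)))"
      by (rule sum_mono) (rule b)
    moreover have "(\<Sum>t=1..T. E t (y t) - E t (y (t + 1))) \<le> (\<Sum>t=1..T. 4 * G\<^sup>2 / (lam * real t))"
      by (rule sum_mono) (rule dd)
    ultimately show ?thesis by linarith
  qed
  also have "\<dots> = G\<^sup>2 / lam * (4 * (\<Sum>t=1..T. 1 / real t)
           + (\<Sum>t=1..T. real (card (miss d t)) / (real t - 1)))"
    by (simp add: sum_distrib_left distrib_left ac_simps)
  finally show ?thesis .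
qed


lemma harm_bound: "T \<ge> 1 \<Longrightarrow> (\<Sum>t=1..T. 1 / real t) \<le> 1 + ln (real T)"
proof (induction T rule: dec_induct)
  case base thus ?case by simp
next
  case (step k)
  have kp: "real k > 0" using step by simp
  have "ln (real k / (real k + 1)) \<le> real k / (real k + 1) - 1"
    using kp by (intro ln_le_minus_one) simp
  also have "\<dots> = - (1 / (real k + 1))" using kp by (simp add: field_simps)
  finally have "1 / (real k + 1) \<le> ln (real k + 1) - ln (real k)"
    using kp by (simp add: ln_div)
  moreover have "(\<Sum>t=1..Suc k. 1 / real t) = (\<Sum>t=1..k. 1 / real t) + 1 / (real k + 1)"
    by (simp add: add.commute)
  moreover have "ln (real (Suc k)) = ln (real k + 1)" by (simp add: add.commute)
  ultimately show ?case using step.IH by argo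
qed

lemma ln2_half: "ln (2::real) \<ge> 1 / 2"
proof -
  have "ln (1 / 2 :: real) \<le> 1 / 2 - 1" by (intro ln_le_minus_one) simp
  thus ?thesis by (simp add: ln_div)
qed

lemma harm_bound2: "T \<ge> 2 \<Longrightarrow> (\<Sum>t=1..T. 1 / real t) \<le> 3 * ln (real T)"
proof -
  assume T: "T \<ge> 2"
  have "ln (2::real) \<le> ln (real T)" using T by simp
  hence "1 / 2 \<le> ln (real T)" using ln2_half by linarith
  moreover have "(\<Sum>t=1..T. 1 / real t) \<le> 1 + ln (real T)" using T by (intro harm_bound) simp
  ultimately show ?thesis by linarith
qed

lemma sigma_part:
  assumes T: "T \<ge> 1"
  shows "(\<Sum>t=1..T. real (card (miss d t)) / (real t - 1)) \<le> 2 * real (sigma_max d T) * (\<Sum>t=1..T. 1 / real t)"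
proof -
  have "(\<Sum>t=1..T. real (card (miss d t)) / (real t - 1)) \<le> (\<Sum>t=1..T. 2 * real (sigma_max d T) * (1 / real t))"
  proof (rule sum_mono)
    fix t assume t: "t \<in> {1..T}"
    have cm: "card (miss d t) \<le> sigma_max d T" unfolding sigma_max_def using t by (intro Max_ge) auto
    show "real (card (miss d t)) / (real t - 1) \<le> 2 * real (sigma_max d T) * (1 / real t)"
    proof (cases "t = 1")
      case True thus ?thesis by simp
    next
      case False
      hence tp: "real t - 1 > 0" "real t \<ge> 2" using t by auto
      have "real (card (miss d t)) / (real t - 1) \<le> real (sigma_max d T) / (real t - 1)"
        using cm tp by (intro divide_right_mono) auto
      also have "\<dots> \<le> real (sigma_max d T) * (2 / real t)"
      proof -
        have "1 / (real t - 1) \<le> 2 / real t" using tp by (simp add: field_simps)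
        thus ?thesis by (metis divide_inverse inverse_eq_divide mult_left_mono of_nat_0_le_iff)
      qed
      also have "\<dots> = 2 * real (sigma_max d T) * (1 / real t)" by simp
      finally show ?thesis .
    qed
  qed
  also have "\<dots> = 2 * real (sigma_max d T) * (\<Sum>t=1..T. 1 / real t)" by (simp add: sum_distrib_left)
  finally show ?thesis .
qed

lemma miss_sum: "(\<Sum>t=1..T. card (miss d t)) \<le> d_tot d T"
proof -
  have "(\<Sum>t=1..T. card (miss d t)) = (\<Sum>t=1..T. \<Sum>\<tau>=1..T. if \<tau> \<in> miss d t then 1 else 0)"
  proof (rule sum.cong[OF refl])
    fix t assume t: "t \<in> {1..T}"
    have sub: "miss d t \<subseteq> {1..T}" using t unfolding miss_def by auto
    have "(\<Sum>\<tau>=1..T. if \<tau> \<in> miss d t then 1 else 0 :: nat) = card {\<tau> \<in> {1..T}. \<tau> \<in> miss d t}"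
      by (simp add: sum.inter_filter[symmetric])
    also have "{\<tau> \<in> {1..T}. \<tau> \<in> miss d t} = miss d t" using sub by auto
    finally show "card (miss d t) = (\<Sum>\<tau>=1..T. if \<tau> \<in> miss d t then 1 else 0)" by simp
  qed
  also have "\<dots> = (\<Sum>\<tau>=1..T. \<Sum>t=1..T. if \<tau> \<in> miss d t then 1 else 0)" by (rule sum.swap)
  also have "\<dots> \<le> (\<Sum>\<tau>=1..T. d \<tau>)"
  proof (rule sum_mono)
    fix \<tau> assume "\<tau> \<in> {1..T}"
    have "(\<Sum>t=1..T. if \<tau> \<in> miss d t then 1 else 0 :: nat) = card {t \<in> {1..T}. \<tau> \<in> miss d t}"
      by (simp add: sum.inter_filter[symmetric])
    also have "\<dots> \<le> card {\<tau>+1..\<tau> + d \<tau>}"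
      by (rule card_mono) (auto simp: miss_def obs_def)
    finally show "(\<Sum>t=1..T. if \<tau> \<in> miss d t then 1 else 0 :: nat) \<le> d \<tau>" by simp
  qed
  finally show ?thesis unfolding d_tot_def .
qed

lemma sqrt_part_gen:
  fixes a :: "nat \<Rightarrow> real"
  assumes a0: "\<And>t. t \<in> {1..T} \<Longrightarrow> 0 \<le> a t" and a1: "\<And>t. t \<in> {1..T} \<Longrightarrow> a t \<le> real t - 1"
    and D: "(\<Sum>t=1..T. a t) \<le> D"
  shows "(\<Sum>t=1..T. a t / (real t - 1)) \<le> 2 * sqrt D"
proof -
  have D0: "D \<ge> 0" using D a0 sum_nonneg[of "{1..T}" a] by fastforce
  define K where "K = sqrt D"
  show ?thesis
  proof (cases "D = 0")
    case True
    hence "\<forall>t\<in>{1..T}. a t = 0" using D a0 sum_nonneg_eq_0_iff[of "{1..T}" a]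
      by (metis antisym finite_atLeastAtMost sum_nonneg)
    thus ?thesis using D0 by simp
  next
    case False
    hence Kp: "K > 0" using D0 unfolding K_def by simp
    have KK: "K * K = D" unfolding K_def using D0 by simp
    let ?P = "\<lambda>t. 1 < t \<and> real t - 1 \<le> K"
    have "(\<Sum>t=1..T. a t / (real t - 1)) \<le> (\<Sum>t=1..T. (if ?P t then 1 else 0) + a t / K)"
    proof (rule sum_mono)
      fix t assume t: "t \<in> {1..T}"
      show "a t / (real t - 1) \<le> (if ?P t then 1 else 0) + a t / K"
      proof (cases "t = 1")
        case True thus ?thesis using a0[OF t] Kp by simp
      next
        case False
        hence tp: "real t - 1 > 0" using t by auto
        show ?thesis
        proof (cases "real t - 1 \<le> K")
          case True
          have h1: "a t / (real t - 1) \<le> 1" using a1[OF t] tp by simp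
          have h2: "a t / K \<ge> 0" using a0[OF t] Kp by simp
          have "(if ?P t then 1 else 0) = (1::real)" using True False t by auto
          thus ?thesis using h1 h2 by argo
        next
          case False
          hence "a t / (real t - 1) \<le> a t / K" using a0[OF t] Kp by (intro divide_left_mono) auto
          thus ?thesis using False by simp
        qed
      qed
    qed
    also have "\<dots> = real (card {t \<in> {1..T}. ?P t}) + (\<Sum>t=1..T. a t) / K"
      by (simp add: sum.distrib sum_divide_distrib sum.inter_filter[symmetric])
    also have "\<dots> \<le> K + K"
    proof -
      have "{t \<in> {1..T}. ?P t} \<subseteq> (\<lambda>s. s + 1) ` {1..nat \<lfloor>K\<rfloor>}"
      proof
        fix t assume "t \<in> {t \<in> {1..T}. ?P t}"
        hence t: "1 < t" "real t - 1 \<le> K" by auto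
        have "real (t - 1) \<le> K" using t by (simp add: of_nat_diff)
        hence "int (t - 1) \<le> \<lfloor>K\<rfloor>" by (simp add: le_floor_iff)
        hence "t - 1 \<le> nat \<lfloor>K\<rfloor>" by linarith
        hence "t - 1 \<in> {1..nat \<lfloor>K\<rfloor>}" using t by simp
        moreover have "t = (t - 1) + 1" using t by simp
        ultimately show "t \<in> (\<lambda>s. s + 1) ` {1..nat \<lfloor>K\<rfloor>}" by (rule image_eqI[rotated])
      qed
      hence "card {t \<in> {1..T}. ?P t} \<le> card ((\<lambda>s. s + 1) ` {1..nat \<lfloor>K\<rfloor>})" by (intro card_mono) auto
      also have "\<dots> \<le> nat \<lfloor>K\<rfloor>" using card_image_le[of "{1..nat \<lfloor>K\<rfloor>}" "\<lambda>s. s + 1"] by simp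
      finally have "real (card {t \<in> {1..T}. ?P t}) \<le> real (nat \<lfloor>K\<rfloor>)" by (rule of_nat_mono)
      also have "real (nat \<lfloor>K\<rfloor>) = of_int \<lfloor>K\<rfloor>" using Kp by simp
      also have "\<dots> \<le> K" by (rule of_int_floor_le)
      finally have c1: "real (card {t \<in> {1..T}. ?P t}) \<le> K" .
      have "(\<Sum>t=1..T. a t) / K \<le> D / K" using D Kp by (intro divide_right_mono) auto
      also have "\<dots> = K" using KK Kp by (simp add: field_simps)
      finally show ?thesis using c1 by linarith
    qed
    finally show ?thesis unfolding K_def by simp
  qed
qed

theorem theorem3p1:
  shows "\<exists>C>0. \<forall>(T::nat) (n::nat) (X::(nat \<Rightarrow> real) set) (lam::real) (G::real)
      (f::nat \<Rightarrow> (nat \<Rightarrow> real) \<Rightarrow> real) (gradf::nat \<Rightarrow> (nat \<Rightarrow> real) \<Rightarrow> (nat \<Rightarrow> real))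
      (d::nat \<Rightarrow> nat) (x::nat \<Rightarrow> (nat \<Rightarrow> real)).
      T \<ge> 2 \<and> n \<ge> 1 \<and> X \<subseteq> Rn n \<and> X \<noteq> {} \<and> rn_closed n X \<and> cvx_set X \<and>
      lam > 0 \<and> G \<ge> 0 \<and>
      (\<forall>t\<in>{1..T}. t + d t \<le> T) \<and>
      (\<forall>t\<in>{1..T}. cvx_fun X (f t) \<and>
          (\<forall>z\<in>X. has_grad n (f t) (gradf t z) z) \<and>
          strongly_cvx n lam X (f t) (gradf t) \<and>
          (\<forall>z\<in>X. nrm n (gradf t z) \<le> G)) \<and>
      delayed_ftrl n lam X d gradf x T
      \<longrightarrow> (\<forall>u\<in>X. (\<Sum>t=1..T. f t (x t) - f t u)
            \<le> C * (G\<^sup>2 / lam) * (ln (real T) +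
                 min (real (sigma_max d T) * ln (real T)) (sqrt (real (d_tot d T)))))"
proof (intro exI[of _ 12] conjI allI impI ballI)
  fix T n X lam G f gradf d x u
  assume A: "T \<ge> 2 \<and> n \<ge> 1 \<and> X \<subseteq> Rn n \<and> X \<noteq> {} \<and> rn_closed n X \<and> cvx_set X \<and>
      lam > 0 \<and> G \<ge> 0 \<and>
      (\<forall>t\<in>{1..T}. t + d t \<le> T) \<and>
      (\<forall>t\<in>{1..T}. cvx_fun X (f t) \<and>
          (\<forall>z\<in>X. has_grad n (f t) (gradf t z) z) \<and>
          strongly_cvx n lam X (f t) (gradf t) \<and>
          (\<forall>z\<in>X. nrm n (gradf t z) \<le> G)) \<and>
      delayed_ftrl n lam X d gradf x T"
    and u: "u \<in> X"
  have T2: "T \<ge> 2" and lam: "lam > 0" and G: "G \<ge> 0" using A by auto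
  define H where "H = (\<Sum>t=1..T. 1 / real t)"
  define S where "S = (\<Sum>t=1..T. real (card (miss d t)) / (real t - 1))"
  define \<sigma> where "\<sigma> = real (sigma_max d T)"
  define D where "D = real (d_tot d T)"
  define lT where "lT = ln (real T)"
  have R: "(\<Sum>t=1..T. f t (x t) - f t u) \<le> G\<^sup>2 / lam * (4 * H + S)"
    unfolding H_def S_def
    by (rule main_bound[of X n lam G T f gradf d x u]) (use A u in auto)
  have H3: "H \<le> 3 * lT" unfolding H_def lT_def using T2 by (rule harm_bound2)
  have lT0: "lT \<ge> 0" unfolding lT_def using T2 by simp
  have s0: "\<sigma> \<ge> 0" unfolding \<sigma>_def by simp
  have S1: "S \<le> 2 * \<sigma> * H" unfolding S_def \<sigma>_def H_def using T2 by (intro sigma_part) simp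
  also have "\<dots> \<le> 2 * \<sigma> * (3 * lT)" using H3 s0 by (intro mult_left_mono) auto
  finally have S1': "S \<le> 6 * (\<sigma> * lT)" by simp
  have S2: "S \<le> 2 * sqrt D" unfolding S_def D_def
  proof (rule sqrt_part_gen)
    fix t assume t: "t \<in> {1..T}"
    show "0 \<le> real (card (miss d t))" by simp
    have "card (miss d t) \<le> t - 1" by (rule card_miss)
    hence c: "real (card (miss d t)) \<le> real (t - 1)" by (rule of_nat_mono)
    have "real (t - 1) = real t - 1" using t by (simp add: of_nat_diff)
    thus "real (card (miss d t)) \<le> real t - 1" using c by argo
  next
    have "(\<Sum>t=1..T. card (miss d t)) \<le> d_tot d T" by (rule miss_sum)
    hence "real (\<Sum>t=1..T. card (miss d t)) \<le> real (d_tot d T)" by (rule of_nat_mono)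
    thus "(\<Sum>t=1..T. real (card (miss d t))) \<le> real (d_tot d T)" by simp
  qed
  have Smin: "S \<le> 12 * min (\<sigma> * lT) (sqrt D)"
  proof (cases "\<sigma> * lT \<le> sqrt D")
    case True
    have "\<sigma> * lT \<ge> 0" using s0 lT0 by simp
    thus ?thesis using True S1' by (simp add: min_def)
  next
    case False
    have "sqrt D \<ge> 0" unfolding D_def by simp
    hence "S \<le> 12 * sqrt D" using S2 by linarith
    thus ?thesis using False by (simp add: min_def)
  qed
  have "4 * H + S \<le> 12 * (lT + min (\<sigma> * lT) (sqrt D))" using H3 Smin by simp
  hence "G\<^sup>2 / lam * (4 * H + S) \<le> G\<^sup>2 / lam * (12 * (lT + min (\<sigma> * lT) (sqrt D)))"
    using lam by (intro mult_left_mono) auto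
  also have "\<dots> = 12 * (G\<^sup>2 / lam) * (lT + min (\<sigma> * lT) (sqrt D))" by simp
  finally have "(\<Sum>t=1..T. f t (x t) - f t u) \<le> 12 * (G\<^sup>2 / lam) * (lT + min (\<sigma> * lT) (sqrt D))"
    using R by (rule order_trans[rotated])
  thus "(\<Sum>t=1..T. f t (x t) - f t u)
            \<le> 12 * (G\<^sup>2 / lam) * (ln (real T) +
                 min (real (sigma_max d T) * ln (real T)) (sqrt (real (d_tot d T))))"
    unfolding lT_def \<sigma>_def D_def .
qed simp

end
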